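(* For procedure $\mathcal{G}_{APL}(p,\mathrm{lb},\beta,\theta)$, run with any $\alpha_k\in(0,1]$ and with $\mathrm{lb}\le f^*$, the following hold: (a) $\{X'_k\}_{k\ge0}$ is a sequence of localizers of $\mathcal{L}_f(l)$; (b) $\underline f_0\le\underline f_1\le\cdots\le\underline f_k\le f^*$ and $\overline f_0\ge\overline f_1\ge\cdots\ge\overline f_k\ge f^*$ for any $k\ge1$; (c) the problem defining $x_k$ in Step 2 is always feasible unless the procedure terminates; (d) $\emptyset\ne\underline X_k\subseteq\overline X_k$ for any $k\ge1$, so Step 4 is always feasible unless the procedure terminates; (e) whenever the procedure terminates, $f(p^+)-\mathrm{lb}^+\le q\,[f(p)-\mathrm{lb}]$, where $q\equiv q(\beta,\theta):=1-(1-\theta)\min\{\beta,1-\beta\}$.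
   Context: Problem: $f^*=\min_{x\in X}f(x)$, $X\subseteq\mathbb{R}^n$ nonempty convex compact, $\mathbb{R}^n$ with an arbitrary norm $\|\cdot\|$; $f:X\to\mathbb{R}$ convex with oracle returning $f(x)$ and $f'(x)\in\partial f(x)$; $h(z,x):=f(z)+\langle f'(z),x-z\rangle$; $\mathcal{L}_f(l):=\{x\in X:f(x)\le l\}$; a localizer of $\mathcal{L}_f(l)$ is a convex compact set $X'$ with $\mathcal{L}_f(l)\subseteq X'\subseteq X$. $\omega:X\to\mathbb{R}$ is a prox-function: differentiable and strongly convex with modulus $\sigma_\omega>0$, i.e. $\langle\nabla\omega(x)-\nabla\omega(z),x-z\rangle\ge\sigma_\omega\|x-z\|^2$ on $X$. Procedure $\mathcal{G}_{APL}(p,\mathrm{lb},\beta,\theta)$ ($p\in X$, $\beta,\theta\in(0,1)$, given $\alpha_k\in(0,1]$): Step 0: $x^u_0=p$, $\overline f_0=f(p)$, $\underline f_0=\mathrm{lb}$, $l=\beta\underline f_0+(1-\beta)\overline f_0$; choose $x_0\in X$ and an initial localizer $X'_0$ of $\mathcal{L}_f(l)$ (e.g. $x_0=p$, $X'_0=X$); $d_\omega(x)=\omega(x)-[\omega(x_0)+\langle\nabla\omega(x_0),x-x_0\rangle]$; $k=1$. Step 1: $x^l_k=(1-\alpha_k)x^u_{k-1}+\alpha_kx_{k-1}$, $\underline h_k=\min_{x\in X'_{k-1}}h(x^l_k,x)$ ($+\infty$ if infeasible), $\underline f_k=\max\{\underline f_{k-1},\min\{l,\underline h_k\}\}$; if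 $\underline f_k\ge l-\theta(l-\underline f_0)$ terminate with $p^+=x^u_{k-1}$, $\mathrm{lb}^+=\underline f_k$. Step 2: $x_k=\operatorname{argmin}_{x\in X'_{k-1}}\{d_\omega(x):h(x^l_k,x)\le l\}$. Step 3: $\overline f_k=\min\{\overline f_{k-1},f(\alpha_kx_k+(1-\alpha_k)x^u_{k-1})\}$, choose $x^u_k$ with $f(x^u_k)=\overline f_k$; if $\overline f_k\le l+\theta(\overline f_0-l)$ terminate with $p^+=x^u_k$, $\mathrm{lb}^+=\underline f_k$. Step 4: choose a closed convex set $X'_k$ with $\underline X_k\subseteq X'_k\subseteq\overline X_k$, where $\underline X_k:=\{x\in X'_{k-1}:h(x^l_k,x)\le l\}$ and $\overline X_k:=\{x\in X:\langle\nabla d_\omega(x_k),x-x_k\rangle\ge0\}$. Step 5: $k\leftarrow k+1$, go to Step 1. *)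

theory Defs
  imports "HOL-Analysis.Analysis"
begin

definition is_norm :: "('a::real_vector \<Rightarrow> real) \<Rightarrow> bool" where
  "is_norm N \<longleftrightarrow> (\<forall>x. 0 \<le> N x) \<and> (\<forall>x. N x = 0 \<longleftrightarrow> x = 0)
     \<and> (\<forall>c x. N (c *\<^sub>R x) = \<bar>c\<bar> * N x) \<and> (\<forall>x y. N (x + y) \<le> N x + N y)"

definition is_subgradient :: "'a::real_inner set \<Rightarrow> ('a \<Rightarrow> real) \<Rightarrow> 'a \<Rightarrow> 'a \<Rightarrow> bool" where
  "is_subgradient X f z g \<longleftrightarrow> (\<forall>y\<in>X. f y \<ge> f z + g \<bullet> (y - z))"

definition level_set :: "'a set \<Rightarrow> ('a \<Rightarrow> real) \<Rightarrow> real \<Rightarrow> 'a set" where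
  "level_set X f l = {x \<in> X. f x \<le> l}"

definition localizer :: "'a::real_normed_vector set \<Rightarrow> ('a \<Rightarrow> real) \<Rightarrow> real \<Rightarrow> 'a set \<Rightarrow> bool" where
  "localizer X f l X' \<longleftrightarrow> convex X' \<and> compact X' \<and> level_set X f l \<subseteq> X' \<and> X' \<subseteq> X"

end

theory Submission
  imports Defs
begin

lemma opt_cond:
  fixes \<omega> :: "'a::euclidean_space \<Rightarrow> real"
  assumes der: "(\<omega> has_derivative (\<lambda>v. G \<bullet> v)) (at u within X)"
    and seg: "\<forall>t\<in>{0..1}. u + t *\<^sub>R (y - u) \<in> X"
    and mn: "\<forall>t\<in>{0..1}. \<omega> u + t * c \<le> \<omega> (u + t *\<^sub>R (y - u))"
  shows "c \<le> G \<bullet> (y - u)"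
proof (rule ccontr)
  assume neg: "\<not> c \<le> G \<bullet> (y - u)"
  define \<gamma> where "\<gamma> = (\<lambda>t::real. u + t *\<^sub>R (y - u))"
  have g: "(\<gamma> has_derivative (\<lambda>s. s *\<^sub>R (y - u))) (at 0 within {0..1})"
    unfolding \<gamma>_def by (auto intro!: derivative_eq_intros)
  have sub: "\<gamma> ` {0..1} \<subseteq> X" using seg by (auto simp: \<gamma>_def)
  have d2: "(\<omega> has_derivative (\<lambda>v. G \<bullet> v)) (at (\<gamma> 0) within \<gamma> ` {0..1})"
    using has_derivative_subset[OF der sub] by (simp add: \<gamma>_def)
  have "((\<omega> \<circ> \<gamma>) has_derivative ((\<lambda>v. G \<bullet> v) \<circ> (\<lambda>s. s *\<^sub>R (y - u)))) (at 0 within {0..1})"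
    by (rule diff_chain_within[OF g d2])
  then have "((\<lambda>t. \<omega> (\<gamma> t) - t * c) has_derivative (\<lambda>s. s * (G \<bullet> (y - u)) - s * c)) (at 0 within {0..1})"
    by (auto intro!: derivative_eq_intros simp: o_def)
  then have "((\<lambda>t. \<omega> (\<gamma> t) - t * c) has_real_derivative (G \<bullet> (y - u) - c)) (at 0 within {0..1})"
    unfolding has_field_derivative_def
    by (rule has_derivative_eq_rhs) (auto simp: algebra_simps fun_eq_iff)
  from has_real_derivative_neg_dec_right[OF this] neg
  obtain e where e: "e > 0" "\<forall>h>0. 0 + h \<in> {0..1} \<longrightarrow> h < e \<longrightarrow> \<omega> (\<gamma> 0) - 0 * c > \<omega> (\<gamma> (0 + h)) - (0 + h) * c"
    by auto
  define hh where "hh = min (e/2) 1"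
  have "hh > 0" "hh \<in> {0..1}" "hh < e" using e by (auto simp: hh_def)
  with e have "\<omega> (\<gamma> 0) > \<omega> (\<gamma> hh) - hh * c" by auto
  moreover have "\<omega> u + hh * c \<le> \<omega> (\<gamma> hh)" using mn \<open>hh \<in> {0..1}\<close> by (auto simp: \<gamma>_def)
  ultimately show False by (simp add: \<gamma>_def)
qed

lemma lin_bdd:
  fixes b c :: "'a::euclidean_space"
  shows "compact A \<Longrightarrow> bdd_below ((\<lambda>y. a + b \<bullet> (y - c)) ` A)"
  by (intro bounded_imp_bdd_below compact_imp_bounded compact_continuous_image)
     (auto intro!: continuous_intros)

theorem lemma3p2:
  fixes X :: "'a::euclidean_space set" and nrm :: "'a \<Rightarrow> real"
    and f :: "'a \<Rightarrow> real" and f' :: "'a \<Rightarrow> 'a"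
    and \<omega> :: "'a \<Rightarrow> real" and g\<omega> :: "'a \<Rightarrow> 'a" and \<sigma> :: real
    and p :: 'a and lb \<beta> \<theta> :: real and \<alpha> :: "nat \<Rightarrow> real"
    and xu xl x :: "nat \<Rightarrow> 'a" and flow fup :: "nat \<Rightarrow> real" and Xp :: "nat \<Rightarrow> 'a set"
    and l q :: real and h :: "'a \<Rightarrow> 'a \<Rightarrow> real" and d :: "'a \<Rightarrow> real"
    and S Ov :: "nat \<Rightarrow> 'a set" and T1 T3 reached :: "nat \<Rightarrow> bool"
  assumes X: "convex X" "compact X" "X \<noteq> {}"
    and nrm: "is_norm nrm"
    and fconv: "convex_on X f"
    and fsub: "\<forall>z\<in>X. is_subgradient X f z (f' z)"
    and \<omega>diff: "\<forall>z\<in>X. (\<omega> has_derivative (\<lambda>v. g\<omega> z \<bullet> v)) (at z within X)"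
    and \<sigma>: "\<sigma> > 0"
    and \<omega>sc: "\<forall>y\<in>X. \<forall>z\<in>X. (g\<omega> y - g\<omega> z) \<bullet> (y - z) \<ge> \<sigma> * (nrm (y - z))\<^sup>2"
    and p: "p \<in> X"
    and lb: "lb \<le> Inf (f ` X)"
    and \<beta>: "0 < \<beta>" "\<beta> < 1" and \<theta>: "0 < \<theta>" "\<theta> < 1"
    and \<alpha>: "\<forall>k\<ge>1. 0 < \<alpha> k \<and> \<alpha> k \<le> 1"
  defines "l \<equiv> \<beta> * lb + (1 - \<beta>) * f p"
    and "h \<equiv> (\<lambda>z y. f z + f' z \<bullet> (y - z))"
    and "d \<equiv> (\<lambda>y. \<omega> y - (\<omega> (x 0) + g\<omega> (x 0) \<bullet> (y - x 0)))"
    and "S \<equiv> (\<lambda>k. {y \<in> Xp (k - 1). h (xl k) y \<le> l})"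
    and "Ov \<equiv> (\<lambda>k. {y \<in> X. (g\<omega> (x k) - g\<omega> (x 0)) \<bullet> (y - x k) \<ge> 0})"
    and "T1 \<equiv> (\<lambda>k. flow k \<ge> l - \<theta> * (l - flow 0))"
    and "T3 \<equiv> (\<lambda>k. fup k \<le> l + \<theta> * (fup 0 - l))"
    and "reached \<equiv> (\<lambda>k. \<forall>j. 1 \<le> j \<and> j < k \<longrightarrow> \<not> T1 j \<and> S j \<noteq> {} \<and> \<not> T3 j \<and> S j \<subseteq> Ov j)"
    and "q \<equiv> 1 - (1 - \<theta>) * min \<beta> (1 - \<beta>)"
  assumes step0: "xu 0 = p" "fup 0 = f p" "flow 0 = lb" "x 0 \<in> X" "localizer X f l (Xp 0)"
    and step1: "\<forall>k\<ge>1. reached k \<longrightarrow>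
        xl k = (1 - \<alpha> k) *\<^sub>R xu (k - 1) + \<alpha> k *\<^sub>R x (k - 1)
      \<and> flow k = max (flow (k - 1))
           (if Xp (k - 1) = {} then l else min l (Inf (h (xl k) ` Xp (k - 1))))"
    and step2: "\<forall>k\<ge>1. reached k \<and> \<not> T1 k \<and> S k \<noteq> {} \<longrightarrow>
        x k \<in> S k \<and> (\<forall>y\<in>S k. d (x k) \<le> d y)"
    and step3: "\<forall>k\<ge>1. reached k \<and> \<not> T1 k \<and> S k \<noteq> {} \<longrightarrow>
        fup k = min (fup (k - 1)) (f (\<alpha> k *\<^sub>R x k + (1 - \<alpha> k) *\<^sub>R xu (k - 1)))
      \<and> xu k \<in> X \<and> f (xu k) = fup k"
    and step4: "\<forall>k\<ge>1. reached k \<and> \<not> T1 k \<and> S k \<noteq> {} \<and> \<not> T3 k \<and> S k \<subseteq> Ov k \<longrightarrow>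
        closed (Xp k) \<and> convex (Xp k) \<and> S k \<subseteq> Xp k \<and> Xp k \<subseteq> Ov k"
  shows
    "(\<forall>k. reached (Suc k) \<longrightarrow> localizer X f l (Xp k))
   \<and> (flow 0 \<le> Inf (f ` X) \<and> Inf (f ` X) \<le> fup 0
      \<and> (\<forall>k\<ge>1. reached k \<longrightarrow> flow (k - 1) \<le> flow k \<and> flow k \<le> Inf (f ` X))
      \<and> (\<forall>k\<ge>1. reached k \<and> \<not> T1 k \<longrightarrow> fup k \<le> fup (k - 1) \<and> Inf (f ` X) \<le> fup k))
   \<and> (\<forall>k\<ge>1. reached k \<and> \<not> T1 k \<longrightarrow> S k \<noteq> {})
   \<and> (\<forall>k\<ge>1. reached k \<and> \<not> T1 k \<and> \<not> T3 k \<longrightarrow> {} \<noteq> S k \<and> S k \<subseteq> Ov k)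
   \<and> (\<forall>k\<ge>1. reached k \<and> T1 k \<longrightarrow> f (xu (k - 1)) - flow k \<le> q * (f p - lb))
   \<and> (\<forall>k\<ge>1. reached k \<and> \<not> T1 k \<and> T3 k \<longrightarrow> f (xu k) - flow k \<le> q * (f p - lb))"
  proof -
  define F where "F = Inf (f ` X)"
  have reachD: "\<not> T1 j \<and> S j \<noteq> {} \<and> \<not> T3 j \<and> S j \<subseteq> Ov j"
    if "reached k" "1 \<le> j" "j < k" for k j
    using that unfolding reached_def by blast
  have reach_mono: "reached j" if "reached k" "j \<le> k" for j k
    using that unfolding reached_def by auto
  have OvX: "Ov k \<subseteq> X" for k unfolding Ov_def by auto
  obtain B where B: "\<forall>y\<in>X. B \<le> f p + f' p \<bullet> (y - p)"
    using lin_bdd[OF X(2), of "f p" "f' p" p] unfolding bdd_below_def by auto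
  have bddF: "bdd_below (f ` X)"
  proof -
    have "\<forall>y\<in>X. B \<le> f y" using B fsub p unfolding is_subgradient_def by force
    then show ?thesis unfolding bdd_below_def by auto
  qed
  have Fle: "F \<le> f y" if "y \<in> X" for y
    unfolding F_def using bddF that by (auto intro: cInf_lower)
  have lbF: "lb \<le> F" using lb F_def by simp
  have lbfp: "lb \<le> f p" using lbF Fle[OF p] by simp
  have llb1: "l - lb = (1 - \<beta>) * (f p - lb)" "f p - l = \<beta> * (f p - lb)"
    by (simp add: l_def algebra_simps)+
  have z1: "0 \<le> (1 - \<beta>) * (f p - lb)" using lbfp \<beta> by simp
  have z2: "0 \<le> \<beta> * (f p - lb)" using lbfp \<beta> by simp
  have llb: "lb \<le> l" "l \<le> f p" using llb1(1) z1 apply linarith using llb1(2) z2 by linarith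
  have inv: "\<forall>k. reached (Suc k) \<longrightarrow> localizer X f l (Xp k) \<and> x k \<in> X \<and> xu k \<in> X"
  proof
    fix k show "reached (Suc k) \<longrightarrow> localizer X f l (Xp k) \<and> x k \<in> X \<and> xu k \<in> X"
    proof (induction k)
      case 0
      then show ?case using step0 p by auto
    next
      case (Suc k)
      show ?case
      proof
        assume R: "reached (Suc (Suc k))"
        have Rk: "reached (Suc k)" using reach_mono[OF R] by simp
        with Suc.IH have IH: "localizer X f l (Xp k)" "x k \<in> X" "xu k \<in> X" by auto
        have XpX: "Xp k \<subseteq> X" using IH(1) unfolding localizer_def by auto
        from reachD[OF R, of "Suc k"] have nT: "\<not> T1 (Suc k)" "S (Suc k) \<noteq> {}"
          "\<not> T3 (Suc k)" "S (Suc k) \<subseteq> Ov (Suc k)" by auto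
        have xl: "xl (Suc k) = (1 - \<alpha> (Suc k)) *\<^sub>R xu k + \<alpha> (Suc k) *\<^sub>R x k"
          using step1 Rk by auto
        have al: "0 < \<alpha> (Suc k)" "\<alpha> (Suc k) \<le> 1" using \<alpha> by auto
        have xlX: "xl (Suc k) \<in> X" unfolding xl
          by (rule convexD[OF X(1) IH(3) IH(2)]) (use al in auto)
        have s2: "x (Suc k) \<in> S (Suc k)" using step2 Rk nT by auto
        have SX: "S (Suc k) \<subseteq> Xp k" unfolding S_def by auto
        have s3: "xu (Suc k) \<in> X" using step3 Rk nT by auto
        have s4: "closed (Xp (Suc k))" "convex (Xp (Suc k))" "S (Suc k) \<subseteq> Xp (Suc k)"
          "Xp (Suc k) \<subseteq> Ov (Suc k)" using step4 Rk nT by auto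
        have XpX': "Xp (Suc k) \<subseteq> X" using s4(4) OvX by blast
        have cpt: "compact (Xp (Suc k))"
        proof -
          have "compact (X \<inter> Xp (Suc k))" using X(2) s4(1) by blast
          moreover have "X \<inter> Xp (Suc k) = Xp (Suc k)" using XpX' by blast
          ultimately show ?thesis by simp
        qed
        have lev: "level_set X f l \<subseteq> S (Suc k)"
        proof
          fix y assume y: "y \<in> level_set X f l"
          then have yX: "y \<in> X" "f y \<le> l" unfolding level_set_def by auto
          have "y \<in> Xp k" using IH(1) y unfolding localizer_def by auto
          moreover have "h (xl (Suc k)) y \<le> f y"
            using fsub xlX yX unfolding is_subgradient_def h_def by auto
          ultimately show "y \<in> S (Suc k)" using yX unfolding S_def by auto
        qed
        show "localizer X f l (Xp (Suc k)) \<and> x (Suc k) \<in> X \<and> xu (Suc k) \<in> X"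
          unfolding localizer_def using s4 cpt XpX' lev s2 SX XpX s3 by blast
      qed
    qed
  qed
  have locK: "localizer X f l (Xp (k - 1))" if "1 \<le> k" "reached k" for k
    using inv that by (metis Suc_diff_1 less_le_trans zero_less_one)
  have xlX: "xl k \<in> X" if k: "1 \<le> k" "reached k" for k
  proof -
    have R: "reached (Suc (k - 1))" using k by simp
    have I: "x (k - 1) \<in> X" "xu (k - 1) \<in> X" using inv R by auto
    have xl: "xl k = (1 - \<alpha> k) *\<^sub>R xu (k - 1) + \<alpha> k *\<^sub>R x (k - 1)"
      using step1 k by auto
    have al: "0 < \<alpha> k" "\<alpha> k \<le> 1" using \<alpha> k by auto
    show ?thesis unfolding xl
      by (rule convexD[OF X(1) I(2) I(1)]) (use al in auto)
  qed
  have hbdd: "bdd_below (h z ` A)" if "compact A" for z A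
    unfolding h_def using lin_bdd[OF that, of "f z" "f' z" z] by simp
  have sec: "(if Xp (k - 1) = {} then l else min l (Inf (h (xl k) ` Xp (k - 1)))) \<le> F"
    if k: "1 \<le> k" "reached k" for k
  proof -
    have L: "localizer X f l (Xp (k - 1))" using locK k .
    have z: "xl k \<in> X" using xlX k .
    show ?thesis
    proof (cases "Xp (k - 1) = {}")
      case True
      have "\<forall>y\<in>X. l \<le> f y"
      proof
        fix y assume y: "y \<in> X"
        show "l \<le> f y"
        proof (rule ccontr)
          assume "\<not> l \<le> f y"
          then have "y \<in> level_set X f l" using y unfolding level_set_def by auto
          then show False using L True unfolding localizer_def by auto
        qed
      qed
      then have "l \<le> F" unfolding F_def using X(3) by (auto intro!: cInf_greatest)
      then show ?thesis using True by simp
    next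
      case False
      let ?I = "Inf (h (xl k) ` Xp (k - 1))"
      have "min l ?I \<le> F"
      proof (rule ccontr)
        assume "\<not> min l ?I \<le> F"
        then have "Inf (f ` X) < min l ?I" unfolding F_def by (simp only: not_le)
        from cInf_lessD[OF _ this] X(3) obtain y where y: "y \<in> X" "f y < min l ?I" by auto
        then have "y \<in> level_set X f l" unfolding level_set_def by auto
        then have yA: "y \<in> Xp (k - 1)" using L unfolding localizer_def by auto
        have "h (xl k) y \<le> f y" using fsub z y unfolding is_subgradient_def h_def by auto
        moreover have "?I \<le> h (xl k) y"
          using hbdd[of "Xp (k - 1)" "xl k"] L yA unfolding localizer_def
          by (auto intro: cInf_lower)
        ultimately show False using y by simp
      qed
      then show ?thesis using False by simp
    qed
  qed
  have flowI: "\<forall>k. reached (Suc k) \<longrightarrow> lb \<le> flow k \<and> flow k \<le> F"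
  proof
    fix k show "reached (Suc k) \<longrightarrow> lb \<le> flow k \<and> flow k \<le> F"
    proof (induction k)
      case 0 then show ?case using step0 lbF by auto
    next
      case (Suc k)
      show ?case
      proof
        assume R: "reached (Suc (Suc k))"
        have Rk: "reached (Suc k)" using reach_mono[OF R] by simp
        have fl: "flow (Suc k) = max (flow k) (if Xp k = {} then l else min l (Inf (h (xl (Suc k)) ` Xp k)))"
          using step1 Rk by auto
        have "(if Xp k = {} then l else min l (Inf (h (xl (Suc k)) ` Xp k))) \<le> F"
          using sec[of "Suc k", unfolded diff_Suc_1] Rk by simp
        then show "lb \<le> flow (Suc k) \<and> flow (Suc k) \<le> F" using Suc.IH Rk fl by auto
      qed
    qed
  qed
  have flowK: "flow (k - 1) \<le> flow k \<and> flow k \<le> F \<and> lb \<le> flow k" if k: "1 \<le> k" "reached k" for k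
  proof -
    have fl: "flow k = max (flow (k - 1)) (if Xp (k - 1) = {} then l else min l (Inf (h (xl k) ` Xp (k - 1))))"
      using step1 k by auto
    have "reached (Suc (k - 1))" using k by simp
    then have "lb \<le> flow (k - 1) \<and> flow (k - 1) \<le> F" using flowI by blast
    then show ?thesis using fl sec[OF k] by auto
  qed
  have cS: "S k \<noteq> {}" if k: "1 \<le> k" "reached k" "\<not> T1 k" for k
  proof -
    have fl: "flow k = max (flow (k - 1)) (if Xp (k - 1) = {} then l else min l (Inf (h (xl k) ` Xp (k - 1))))"
      using step1 k by auto
    have nT: "flow k < l - \<theta> * (l - lb)" using k(3) step0 unfolding T1_def by auto
    have le: "l - \<theta> * (l - lb) \<le> l" using \<theta> llb by auto
    show ?thesis
    proof (cases "Xp (k - 1) = {}")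
      case True
      then show ?thesis using fl nT le by auto
    next
      case False
      let ?I = "Inf (h (xl k) ` Xp (k - 1))"
      have "?I < l" using fl nT le False by auto
      from cInf_lessD[OF _ this] False obtain y where "y \<in> Xp (k - 1)" "h (xl k) y < l" by auto
      then show ?thesis unfolding S_def by auto
    qed
  qed
  have fupI: "\<forall>k. reached (Suc k) \<longrightarrow> f (xu k) = fup k \<and> fup k \<le> f p"
  proof
    fix k show "reached (Suc k) \<longrightarrow> f (xu k) = fup k \<and> fup k \<le> f p"
    proof (induction k)
      case 0 then show ?case using step0 by auto
    next
      case (Suc k)
      show ?case
      proof
        assume R: "reached (Suc (Suc k))"
        have Rk: "reached (Suc k)" using reach_mono[OF R] by simp
        from reachD[OF R, of "Suc k"] have nT: "\<not> T1 (Suc k)" "S (Suc k) \<noteq> {}" by auto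
        have "fup (Suc k) \<le> fup k \<and> f (xu (Suc k)) = fup (Suc k)" using step3 Rk nT by auto
        then show "f (xu (Suc k)) = fup (Suc k) \<and> fup (Suc k) \<le> f p" using Suc.IH Rk by auto
      qed
    qed
  qed
  have dpart: "S k \<subseteq> Ov k" if k: "1 \<le> k" "reached k" "\<not> T1 k" for k
  proof
    fix y assume yS: "y \<in> S k"
    have ne: "S k \<noteq> {}" using cS k .
    have s2: "x k \<in> S k" "\<forall>y\<in>S k. d (x k) \<le> d y" using step2 k ne by auto
    have L: "localizer X f l (Xp (k - 1))" using locK k(1,2) .
    have SX: "S k \<subseteq> X" using L unfolding S_def localizer_def by auto
    have Seq: "S k = Xp (k - 1) \<inter> {y. f' (xl k) \<bullet> y \<le> l - f (xl k) + f' (xl k) \<bullet> xl k}"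
      unfolding S_def h_def by (auto simp: inner_diff_right)
    have cvx: "convex (S k)" unfolding Seq using L unfolding localizer_def
      by (intro convex_Int convex_halfspace_le) auto
    let ?u = "x k"
    have seg: "\<forall>t\<in>{0..1}. ?u + t *\<^sub>R (y - ?u) \<in> S k"
    proof
      fix t :: real assume t: "t \<in> {0..1}"
      have "(1 - t) *\<^sub>R ?u + t *\<^sub>R y \<in> S k"
        by (rule convexD[OF cvx s2(1) yS]) (use t in auto)
      moreover have "(1 - t) *\<^sub>R ?u + t *\<^sub>R y = ?u + t *\<^sub>R (y - ?u)"
        by (simp add: algebra_simps)
      ultimately show "?u + t *\<^sub>R (y - ?u) \<in> S k" by simp
    qed
    have mn: "\<forall>t\<in>{0..1}. \<omega> ?u + t * (g\<omega> (x 0) \<bullet> (y - ?u)) \<le> \<omega> (?u + t *\<^sub>R (y - ?u))"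
    proof
      fix t :: real assume t: "t \<in> {0..1}"
      have "d ?u \<le> d (?u + t *\<^sub>R (y - ?u))" using s2(2) seg t by auto
      then show "\<omega> ?u + t * (g\<omega> (x 0) \<bullet> (y - ?u)) \<le> \<omega> (?u + t *\<^sub>R (y - ?u))"
        unfolding d_def by (simp add: inner_diff_right inner_add_right algebra_simps)
    qed
    have uX: "?u \<in> X" using s2(1) SX by auto
    have "g\<omega> (x 0) \<bullet> (y - ?u) \<le> g\<omega> ?u \<bullet> (y - ?u)"
      by (rule opt_cond[OF \<omega>diff[rule_format, OF uX]]) (use seg SX mn in auto)
    then show "y \<in> Ov k" unfolding Ov_def using yS SX by (auto simp: inner_diff_left)
  qed
  define D where "D = f p - lb"
  have D0: "0 \<le> D" using lbfp D_def by simp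
  define m where "m = min \<beta> (1 - \<beta>)"
  have qD': "q * (f p - lb) = q * D" by (simp add: D_def)
  have qD: "q * D = D - (1 - \<theta>) * m * D" unfolding q_def m_def by (simp add: algebra_simps)
  have m1: "(1 - \<theta>) * m * D \<le> (1 - \<theta>) * (1 - \<beta>) * D"
    using \<theta> D0 by (intro mult_right_mono mult_left_mono) (auto simp: m_def)
  have m2: "(1 - \<theta>) * m * D \<le> (1 - \<theta>) * \<beta> * D"
    using \<theta> D0 by (intro mult_right_mono mult_left_mono) (auto simp: m_def)
  have e1: "f (xu (k - 1)) - flow k \<le> q * (f p - lb)" if k: "1 \<le> k" "reached k" "T1 k" for k
  proof -
    have "reached (Suc (k - 1))" using k by simp
    then have "f (xu (k - 1)) \<le> f p" using fupI by auto
    moreover have "flow k \<ge> l - \<theta> * (l - lb)" using k(3) step0 unfolding T1_def by auto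
    moreover have "f p - (l - \<theta> * (l - lb)) = D - (1 - \<theta>) * (1 - \<beta>) * D"
      unfolding l_def D_def by (simp add: algebra_simps)
    ultimately show ?thesis using qD qD' m1 by linarith
  qed
  have e2: "f (xu k) - flow k \<le> q * (f p - lb)" if k: "1 \<le> k" "reached k" "\<not> T1 k" "T3 k" for k
  proof -
    have ne: "S k \<noteq> {}" using cS k(1-3) .
    have "f (xu k) = fup k" using step3 k ne by auto
    moreover have "fup k \<le> l + \<theta> * (f p - l)" using k(4) step0 unfolding T3_def by auto
    moreover have "lb \<le> flow k" using flowK k by auto
    moreover have "l + \<theta> * (f p - l) - lb = D - (1 - \<theta>) * \<beta> * D"
      unfolding l_def D_def by (simp add: algebra_simps)
    ultimately show ?thesis using qD qD' m2 by linarith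
  qed
  have fupK: "fup k \<le> fup (k - 1) \<and> F \<le> fup k" if k: "1 \<le> k" "reached k" "\<not> T1 k" for k
  proof -
    have ne: "S k \<noteq> {}" using cS k .
    then show ?thesis using step3 k Fle by force
  qed
  show ?thesis
    using inv flowK fupK cS cS[THEN not_sym] dpart e1 e2 lbF Fle[OF p] step0 unfolding F_def
    by (auto simp del: One_nat_def)
qed

end
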